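(* Let $\sigma$ be an ergodic measure-preserving transformation of $(\Omega,\mathbb P)$ and $A\colon\Omega\to M_{d\times d}(\mathbb R)$ measurable with $\log^+\|A(\omega)\|$ integrable. There exists $C>0$ such that for all $\eta_0>0$ there exists $\epsilon_0>0$ such that for all $0<\epsilon<\epsilon_0$ there is a measurable $G\subseteq\Omega$ with $\mathbb P(G)\ge1-\eta_0$ such that for all $\omega\in G$ and all sequences $(\Delta_n)\in U^{\mathbb Z}$, $$\big\|(A(\sigma^{N-1}\omega)+\epsilon\Delta_{N-1})\cdots(A(\omega)+\epsilon\Delta_0)-A(\sigma^{N-1}\omega)\cdots A(\omega)\big\|\le1,$$ where $N=\lfloor C|\log\epsilon|\rfloor$.
   Context: Norms are operator norms; $U=\{M\in M_{d\times d}(\mathbb R):\|M\|\le1\}$. *)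

theory Defs
  imports "HOL-Probability.Probability"
begin

definition measure_preserving_map :: "'a measure \<Rightarrow> ('a \<Rightarrow> 'a) \<Rightarrow> bool" where
  "measure_preserving_map M T \<longleftrightarrow> T \<in> M \<rightarrow>\<^sub>M M \<and>
     (\<forall>B\<in>sets M. emeasure M (T -` B \<inter> space M) = emeasure M B)"

definition ergodic_map :: "'a measure \<Rightarrow> ('a \<Rightarrow> 'a) \<Rightarrow> bool" where
  "ergodic_map M T \<longleftrightarrow> measure_preserving_map M T \<and>
     (\<forall>B\<in>sets M. T -` B \<inter> space M = B \<longrightarrow> measure M B = 0 \<or> measure M B = 1)"

definition mat_opnorm :: "real^'d^'d \<Rightarrow> real" where
  "mat_opnorm X = onorm (\<lambda>x. X *v x)"

fun mat_prod :: "(nat \<Rightarrow> real^'d^'d) \<Rightarrow> nat \<Rightarrow> real^'d^'d" where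
  "mat_prod B 0 = mat 1"
| "mat_prod B (Suc n) = B n ** mat_prod B n"

end

theory Submission
  imports Defs "HOL-Real_Asymp.Real_Asymp"
begin


lemma mo_nonneg: "mat_opnorm X \<ge> 0"
  unfolding mat_opnorm_def by (rule onorm_pos_le) simp

lemma mo_mult: "mat_opnorm (X ** Y) \<le> mat_opnorm X * mat_opnorm Y"
proof -
  have "(\<lambda>x. (X ** Y) *v x) = (\<lambda>x. X *v x) \<circ> (\<lambda>x. Y *v x)"
    by (auto simp: matrix_vector_mul_assoc)
  then show ?thesis unfolding mat_opnorm_def by (simp add: onorm_compose)
qed

lemma mo_add: "mat_opnorm (X + Y) \<le> mat_opnorm X + mat_opnorm Y"
  unfolding mat_opnorm_def matrix_vector_mult_add_rdistrib by (rule onorm_triangle) simp_all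

lemma mo_scale: "mat_opnorm (r *\<^sub>R X) = \<bar>r\<bar> * mat_opnorm X"
proof -
  have "(\<lambda>x. (r *\<^sub>R X) *v x) = (\<lambda>x. r *\<^sub>R (X *v x))"
    by (simp add: scaleR_matrix_vector_assoc)
  then show ?thesis unfolding mat_opnorm_def by (simp add: onorm_scaleR)
qed

lemma mo_one: "mat_opnorm (mat 1 :: real^'d^'d) \<le> 1"
proof -
  have "mat_opnorm (mat 1 :: real^'d^'d) = onorm (\<lambda>x::real^'d. x)"
    unfolding mat_opnorm_def by (rule arg_cong[where f=onorm]) (rule ext, simp)
  then show ?thesis using onorm_id_le by simp
qed

lemma mo_zero: "mat_opnorm (0 :: real^'d^'d) = 0"
proof -
  have "mat_opnorm (0 :: real^'d^'d) = onorm (\<lambda>x::real^'d. 0::real^'d)"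
    unfolding mat_opnorm_def by (rule arg_cong[where f=onorm]) (rule ext, simp)
  then show ?thesis using onorm_zero by simp
qed

lemma mat_sub_ldistrib: "(X::real^'d^'d) ** (P - Q) = X ** P - X ** Q"
  by (metis add_diff_cancel diff_add_cancel matrix_add_ldistrib)

lemma mat_add_rdistrib: "((X::real^'d^'d) + Y) ** P = X ** P + Y ** P"
  by (vector matrix_matrix_mult_def sum.distrib[symmetric] field_simps)

lemma prod_bound:
  fixes Aa Dd :: "nat \<Rightarrow> real^'d^'d" and b :: "nat \<Rightarrow> real" and e :: real
  assumes e: "e \<ge> 0" and ab: "\<And>k. mat_opnorm (Aa k) \<le> b k" and b1: "\<And>k. 1 \<le> b k"
    and dd: "\<And>k. mat_opnorm (Dd k) \<le> 1"
  shows "mat_opnorm (mat_prod Aa n) \<le> (\<Prod>k<n. b k) \<and>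
         mat_opnorm (mat_prod (\<lambda>k. Aa k + e *\<^sub>R Dd k) n - mat_prod Aa n) \<le> (\<Prod>k<n. b k) * ((1+e)^n - 1)"
proof (induction n)
  case 0
  then show ?case by (simp add: mo_one mo_zero)
next
  case (Suc n)
  define P where "P = mat_prod (\<lambda>k. Aa k + e *\<^sub>R Dd k) n"
  define Q where "Q = mat_prod Aa n"
  define B where "B = (\<Prod>k<n. b k)"
  have IH1: "mat_opnorm Q \<le> B" and IH2: "mat_opnorm (P - Q) \<le> B * ((1+e)^n - 1)"
    using Suc by (auto simp: P_def Q_def B_def)
  have B1: "B \<ge> 1" unfolding B_def using b1 by (simp add: prod_ge_1)
  have pe: "(1+e)^n \<ge> 1" using e by simp
  have "mat_opnorm (mat_prod Aa (Suc n)) = mat_opnorm (Aa n ** Q)" by (simp add: Q_def)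
  also have "\<dots> \<le> mat_opnorm (Aa n) * mat_opnorm Q" by (rule mo_mult)
  also have "\<dots> \<le> b n * B" using IH1 ab[of n] by (meson mo_nonneg mult_mono' order.trans)
  finally have 1: "mat_opnorm (mat_prod Aa (Suc n)) \<le> (\<Prod>k<Suc n. b k)" by (simp add: B_def mult.commute)
  have eq: "mat_prod (\<lambda>k. Aa k + e *\<^sub>R Dd k) (Suc n) - mat_prod Aa (Suc n)
        = (Aa n + e *\<^sub>R Dd n) ** (P - Q) + (e *\<^sub>R Dd n) ** Q"
    by (simp add: P_def Q_def mat_sub_ldistrib mat_add_rdistrib)
  have nA: "mat_opnorm (Aa n + e *\<^sub>R Dd n) \<le> b n * (1+e)"
  proof -
    have "mat_opnorm (Aa n + e *\<^sub>R Dd n) \<le> mat_opnorm (Aa n) + e * mat_opnorm (Dd n)"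
      using mo_add[of "Aa n" "e *\<^sub>R Dd n"] e by (simp add: mo_scale)
    also have "\<dots> \<le> b n + e" using ab[of n] dd[of n] e by (smt (verit) mult_left_le)
    also have "\<dots> \<le> b n * (1+e)"
    proof -
      have "e * 1 \<le> e * b n" using e b1[of n] by (intro mult_left_mono) auto
      then show ?thesis by (simp add: algebra_simps)
    qed
    finally show ?thesis .
  qed
  have "mat_opnorm (mat_prod (\<lambda>k. Aa k + e *\<^sub>R Dd k) (Suc n) - mat_prod Aa (Suc n))
     \<le> mat_opnorm (Aa n + e *\<^sub>R Dd n) * mat_opnorm (P - Q) + e * (mat_opnorm (Dd n) * mat_opnorm Q)"
    unfolding eq using mo_add mo_mult[of "Aa n + e *\<^sub>R Dd n" "P - Q"] mo_mult[of "e *\<^sub>R Dd n" Q] e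
    by (smt (verit) mo_scale mult.assoc)
  also have "\<dots> \<le> (b n * (1+e)) * (B * ((1+e)^n - 1)) + e * (1 * B)"
    apply (intro add_mono mult_mono mult_left_mono)
    using nA IH2 dd[of n] IH1 e B1 pe b1[of n] by (auto simp: mo_nonneg)
  also have "\<dots> \<le> (b n * B) * ((1+e)^Suc n - 1)"
  proof -
    have "e * B \<le> e * (b n * B)" proof -
      have "e * 1 \<le> e * b n" using e b1[of n] by (intro mult_left_mono) auto
      then have "e * B \<le> (e * b n) * B" using B1 by (intro mult_right_mono) auto
      then show ?thesis by (simp add: mult.assoc)
    qed
    then show ?thesis by (simp add: algebra_simps)
  qed
  finally show ?case using 1 by (simp add: B_def mult.commute)
qed



lemma mp_distr:
  assumes "measure_preserving_map M \<sigma>"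
  shows "distr M M \<sigma> = M"
proof (rule measure_eqI)
  have m: "\<sigma> \<in> M \<rightarrow>\<^sub>M M" using assms unfolding measure_preserving_map_def by auto
  show "sets (distr M M \<sigma>) = sets M" by simp
  fix B assume "B \<in> sets (distr M M \<sigma>)"
  then have B: "B \<in> sets M" by simp
  show "emeasure (distr M M \<sigma>) B = emeasure M B"
    using assms B m unfolding measure_preserving_map_def by (simp add: emeasure_distr)
qed

lemma mp_int:
  fixes h :: "'a \<Rightarrow> real"
  assumes "measure_preserving_map M \<sigma>" "integrable M h"
  shows "integrable M (\<lambda>x. h (\<sigma> x))" "integral\<^sup>L M (\<lambda>x. h (\<sigma> x)) = integral\<^sup>L M h"
proof -
  have m: "\<sigma> \<in> M \<rightarrow>\<^sub>M M" using assms unfolding measure_preserving_map_def by auto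
  have hm: "h \<in> borel_measurable M" using assms by auto
  have "integrable (distr M M \<sigma>) h" using mp_distr[OF assms(1)] assms(2) by simp
  then show "integrable M (\<lambda>x. h (\<sigma> x))" using integrable_distr_eq[OF m hm] by simp
  have "integral\<^sup>L (distr M M \<sigma>) h = integral\<^sup>L M (\<lambda>x. h (\<sigma> x))"
    by (rule integral_distr[OF m hm])
  then show "integral\<^sup>L M (\<lambda>x. h (\<sigma> x)) = integral\<^sup>L M h" using mp_distr[OF assms(1)] by simp
qed

definition birk :: "('a \<Rightarrow> 'a) \<Rightarrow> ('a \<Rightarrow> real) \<Rightarrow> nat \<Rightarrow> 'a \<Rightarrow> real" where
  "birk \<sigma> g n \<omega> = (\<Sum>k<n. g ((\<sigma> ^^ k) \<omega>))"

lemma birk_0[simp]: "birk \<sigma> g 0 \<omega> = 0" by (simp add: birk_def)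

lemma birk_Suc: "birk \<sigma> g (Suc n) \<omega> = g \<omega> + birk \<sigma> g n (\<sigma> \<omega>)"
  unfolding birk_def by (simp del: sum.lessThan_Suc add: sum.lessThan_Suc_shift funpow_swap1)

lemma birk_diff: "birk \<sigma> (\<lambda>\<omega>. f \<omega> - c) n \<omega> = birk \<sigma> f n \<omega> - real n * c"
  unfolding birk_def by (simp add: sum_subtractf)

lemma birk_meas:
  assumes "\<sigma> \<in> M \<rightarrow>\<^sub>M M" "g \<in> borel_measurable M"
  shows "birk \<sigma> g n \<in> borel_measurable M"
proof (induction n)
  case 0 then show ?case by simp
next
  case (Suc n)
  have "birk \<sigma> g (Suc n) = (\<lambda>\<omega>. g \<omega> + birk \<sigma> g n (\<sigma> \<omega>))" by (rule ext) (simp add: birk_Suc)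
  then show ?case using Suc assms measurable_compose[OF assms(1) Suc] by simp
qed

lemma birk_int:
  assumes "measure_preserving_map M \<sigma>" "integrable M g"
  shows "integrable M (birk \<sigma> g n)"
proof (induction n)
  case 0 then show ?case by simp
next
  case (Suc n)
  have "birk \<sigma> g (Suc n) = (\<lambda>\<omega>. g \<omega> + birk \<sigma> g n (\<sigma> \<omega>))" by (rule ext) (simp add: birk_Suc)
  then show ?case using Suc assms mp_int(1)[OF assms(1) Suc] by simp
qed

fun mx :: "('a \<Rightarrow> 'a) \<Rightarrow> ('a \<Rightarrow> real) \<Rightarrow> nat \<Rightarrow> 'a \<Rightarrow> real" where
  "mx \<sigma> g 0 \<omega> = 0"
| "mx \<sigma> g (Suc N) \<omega> = max (mx \<sigma> g N \<omega>) (birk \<sigma> g (Suc N) \<omega>)"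

lemma mx_nonneg: "mx \<sigma> g N \<omega> \<ge> 0"
  by (induction N) auto

lemma mx_ge: "k \<le> N \<Longrightarrow> birk \<sigma> g k \<omega> \<le> mx \<sigma> g N \<omega>"
proof (induction N)
  case 0 then show ?case by simp
next
  case (Suc N)
  then show ?case by (cases "k = Suc N") auto
qed

lemma mx_attained: "mx \<sigma> g N \<omega> > 0 \<Longrightarrow> \<exists>k. 1 \<le> k \<and> k \<le> N \<and> mx \<sigma> g N \<omega> = birk \<sigma> g k \<omega>"
proof (induction N)
  case 0 then show ?case by simp
next
  case (Suc N)
  show ?case
  proof (cases "birk \<sigma> g (Suc N) \<omega> \<ge> mx \<sigma> g N \<omega>")
    case True then show ?thesis by (intro exI[of _ "Suc N"]) auto
  next
    case False
    then have "mx \<sigma> g (Suc N) \<omega> = mx \<sigma> g N \<omega>" by simp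
    with Suc obtain k where "1 \<le> k" "k \<le> N" "mx \<sigma> g N \<omega> = birk \<sigma> g k \<omega>" by auto
    then show ?thesis using \<open>mx \<sigma> g (Suc N) \<omega> = mx \<sigma> g N \<omega>\<close> by (intro exI[of _ k]) auto
  qed
qed

lemma mx_mono: "mx \<sigma> g N \<omega> \<le> mx \<sigma> g (Suc N) \<omega>" by simp

lemma mx_le0: "mx \<sigma> g N \<omega> \<le> 0 \<longleftrightarrow> (\<forall>k\<le>N. birk \<sigma> g k \<omega> \<le> 0)"
proof
  assume "mx \<sigma> g N \<omega> \<le> 0"
  then show "\<forall>k\<le>N. birk \<sigma> g k \<omega> \<le> 0" using mx_ge[of _ N \<sigma> g \<omega>] by force
next
  assume a: "\<forall>k\<le>N. birk \<sigma> g k \<omega> \<le> 0"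
  show "mx \<sigma> g N \<omega> \<le> 0"
  proof (rule ccontr)
    assume "\<not> mx \<sigma> g N \<omega> \<le> 0"
    then obtain k where "k \<le> N" "mx \<sigma> g N \<omega> = birk \<sigma> g k \<omega>" using mx_attained[of \<sigma> g N \<omega>] by auto
    with a \<open>\<not> mx \<sigma> g N \<omega> \<le> 0\<close> show False by auto
  qed
qed

lemma mx_meas:
  assumes "\<sigma> \<in> M \<rightarrow>\<^sub>M M" "g \<in> borel_measurable M"
  shows "mx \<sigma> g N \<in> borel_measurable M"
proof (induction N)
  case 0 then show ?case by simp
next
  case (Suc N)
  have "mx \<sigma> g (Suc N) = (\<lambda>\<omega>. max (mx \<sigma> g N \<omega>) (birk \<sigma> g (Suc N) \<omega>))" by (rule ext) simp
  then show ?case using Suc birk_meas[OF assms] by simp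
qed

lemma mx_int:
  assumes "measure_preserving_map M \<sigma>" "integrable M g"
  shows "integrable M (mx \<sigma> g N)"
proof (induction N)
  case 0 then show ?case by simp
next
  case (Suc N)
  have "mx \<sigma> g (Suc N) = (\<lambda>\<omega>. max (mx \<sigma> g N \<omega>) (birk \<sigma> g (Suc N) \<omega>))" by (rule ext) simp
  then show ?case using Suc birk_int[OF assms] by simp
qed

lemma mx_key:
  assumes c: "c \<ge> 0" and f: "f \<omega> \<ge> 0"
  shows "mx \<sigma> (\<lambda>\<omega>. f \<omega> - c) N \<omega> - mx \<sigma> (\<lambda>\<omega>. f \<omega> - c) N (\<sigma> \<omega>)
     \<le> f \<omega> - c + c * (if mx \<sigma> (\<lambda>\<omega>. f \<omega> - c) N \<omega> \<le> 0 then 1 else 0)"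
proof (cases "mx \<sigma> (\<lambda>\<omega>. f \<omega> - c) N \<omega> \<le> 0")
  case True
  then show ?thesis using mx_nonneg[of \<sigma> "\<lambda>\<omega>. f \<omega> - c" N "\<sigma> \<omega>"] f by simp
next
  case False
  then obtain k where k: "1 \<le> k" "k \<le> N" "mx \<sigma> (\<lambda>\<omega>. f \<omega> - c) N \<omega> = birk \<sigma> (\<lambda>\<omega>. f \<omega> - c) k \<omega>"
    using mx_attained[of \<sigma> "\<lambda>\<omega>. f \<omega> - c" N \<omega>] False by auto
  then obtain j where j: "k = Suc j" by (cases k) auto
  have "birk \<sigma> (\<lambda>\<omega>. f \<omega> - c) j (\<sigma> \<omega>) \<le> mx \<sigma> (\<lambda>\<omega>. f \<omega> - c) N (\<sigma> \<omega>)"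
    using k j by (intro mx_ge) auto
  then show ?thesis using k False unfolding j by (simp add: birk_Suc)
qed



lemma max_ineq:
  assumes P: "prob_space M" and mp: "measure_preserving_map M \<sigma>" and fi: "integrable M f"
    and f0: "\<And>\<omega>. f \<omega> \<ge> 0" and c: "c \<ge> 0"
  shows "0 \<le> integral\<^sup>L M f - c + c * measure M {\<omega>\<in>space M. mx \<sigma> (\<lambda>\<omega>. f \<omega> - c) N \<omega> \<le> 0}"
proof -
  interpret prob_space M by (rule P)
  define g where "g = (\<lambda>\<omega>. f \<omega> - c)"
  have sm: "\<sigma> \<in> M \<rightarrow>\<^sub>M M" using mp unfolding measure_preserving_map_def by auto
  have gi: "integrable M g" unfolding g_def using fi by simp
  have gm: "g \<in> borel_measurable M" using gi by auto
  have [measurable]: "mx \<sigma> g N \<in> borel_measurable M" by (rule mx_meas[OF sm gm])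
  define F where "F = {\<omega>\<in>space M. mx \<sigma> g N \<omega> \<le> 0}"
  have F: "F \<in> sets M" unfolding F_def by measurable
  have mi: "integrable M (mx \<sigma> g N)" by (rule mx_int[OF mp gi])
  have "0 = integral\<^sup>L M (mx \<sigma> g N) - integral\<^sup>L M (\<lambda>\<omega>. mx \<sigma> g N (\<sigma> \<omega>))"
    using mp_int(2)[OF mp mi] by simp
  also have "\<dots> = integral\<^sup>L M (\<lambda>\<omega>. mx \<sigma> g N \<omega> - mx \<sigma> g N (\<sigma> \<omega>))"
    using mi mp_int(1)[OF mp mi] by simp
  also have "\<dots> \<le> integral\<^sup>L M (\<lambda>\<omega>. f \<omega> - c + c * indicator F \<omega>)"
  proof (rule integral_mono)
    show "integrable M (\<lambda>\<omega>. mx \<sigma> g N \<omega> - mx \<sigma> g N (\<sigma> \<omega>))"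
      using mi mp_int(1)[OF mp mi] by simp
    show "integrable M (\<lambda>\<omega>. f \<omega> - c + c * indicator F \<omega>)"
      using fi F by (intro Bochner_Integration.integrable_add Bochner_Integration.integrable_diff
          integrable_mult_right) (auto simp: integrable_indicator_iff less_top[symmetric])
    fix \<omega> assume "\<omega> \<in> space M"
    then show "mx \<sigma> g N \<omega> - mx \<sigma> g N (\<sigma> \<omega>) \<le> f \<omega> - c + c * indicator F \<omega>"
      using mx_key[of c f \<omega> \<sigma> N, OF c f0] unfolding g_def F_def by (auto simp: indicator_def)
  qed
  also have "\<dots> = integral\<^sup>L M f - c + c * measure M F"
    using fi F by (simp add: Bochner_Integration.integral_add Bochner_Integration.integral_diff
        integrable_indicator_iff less_top[symmetric] prob_space)
  finally show ?thesis unfolding F_def g_def .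
qed



definition unb :: "'a measure \<Rightarrow> ('a \<Rightarrow> 'a) \<Rightarrow> ('a \<Rightarrow> real) \<Rightarrow> 'a set" where
  "unb M \<sigma> g = {\<omega>\<in>space M. \<forall>K::nat. \<exists>n. birk \<sigma> g n \<omega> > real K}"

lemma unb_shift:
  "(\<forall>K::nat. \<exists>n. birk \<sigma> g n (\<sigma> \<omega>) > real K) \<longleftrightarrow> (\<forall>K::nat. \<exists>n. birk \<sigma> g n \<omega> > real K)"
proof
  assume a: "\<forall>K::nat. \<exists>n. birk \<sigma> g n (\<sigma> \<omega>) > real K"
  show "\<forall>K::nat. \<exists>n. birk \<sigma> g n \<omega> > real K"
  proof
    fix K :: nat
    obtain n where n: "birk \<sigma> g n (\<sigma> \<omega>) > real (K + nat \<lceil>\<bar>g \<omega>\<bar>\<rceil>)" using a by blast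
    have "real (K + nat \<lceil>\<bar>g \<omega>\<bar>\<rceil>) \<ge> K + \<bar>g \<omega>\<bar>" by linarith
    then have "birk \<sigma> g (Suc n) \<omega> > real K" using n abs_ge_minus_self[of "g \<omega>"]
      unfolding birk_Suc by linarith
    then show "\<exists>n. birk \<sigma> g n \<omega> > real K" by blast
  qed
next
  assume a: "\<forall>K::nat. \<exists>n. birk \<sigma> g n \<omega> > real K"
  show "\<forall>K::nat. \<exists>n. birk \<sigma> g n (\<sigma> \<omega>) > real K"
  proof
    fix K :: nat
    obtain n where n: "birk \<sigma> g n \<omega> > real (K + nat \<lceil>\<bar>g \<omega>\<bar>\<rceil>)" using a by blast
    have r: "real (K + nat \<lceil>\<bar>g \<omega>\<bar>\<rceil>) \<ge> K + \<bar>g \<omega>\<bar>" by linarith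
    have pos: "birk \<sigma> g n \<omega> > 0" using n r abs_ge_zero[of "g \<omega>"] of_nat_0_le_iff[of K] by linarith
    have "n \<noteq> 0"
    proof
      assume "n = 0"
      then show False using pos by simp
    qed
    then obtain m where m: "n = Suc m" by (cases n) auto
    have "birk \<sigma> g m (\<sigma> \<omega>) > real K" using n r abs_ge_self[of "g \<omega>"] unfolding m birk_Suc by linarith
    then show "\<exists>n. birk \<sigma> g n (\<sigma> \<omega>) > real K" by blast
  qed
qed



lemma unb_null:
  assumes P: "prob_space M" and erg: "ergodic_map M \<sigma>" and fi: "integrable M f"
    and f0: "\<And>\<omega>. f \<omega> \<ge> 0" and c: "c > integral\<^sup>L M f"
  shows "unb M \<sigma> (\<lambda>\<omega>. f \<omega> - c) \<in> sets M" "measure M (unb M \<sigma> (\<lambda>\<omega>. f \<omega> - c)) = 0"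
proof -
  interpret prob_space M by (rule P)
  have mp: "measure_preserving_map M \<sigma>" using erg unfolding ergodic_map_def by blast
  define g where "g = (\<lambda>\<omega>. f \<omega> - c)"
  have sm: "\<sigma> \<in> M \<rightarrow>\<^sub>M M" using mp unfolding measure_preserving_map_def by blast
  have gi: "integrable M g" unfolding g_def using fi by simp
  have gm: "g \<in> borel_measurable M" using gi by auto
  have [measurable]: "\<And>n. birk \<sigma> g n \<in> borel_measurable M" by (rule birk_meas[OF sm gm])
  have [measurable]: "\<And>N. mx \<sigma> g N \<in> borel_measurable M" by (rule mx_meas[OF sm gm])
  define A where "A = unb M \<sigma> g"
  have A: "A \<in> sets M" unfolding A_def unb_def by measurable
  then show "unb M \<sigma> (\<lambda>\<omega>. f \<omega> - c) \<in> sets M" unfolding A_def g_def .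
  have f0i: "integral\<^sup>L M f \<ge> 0" using f0 by (simp add: integral_nonneg)
  have inv: "\<sigma> -` A \<inter> space M = A"
  proof (rule set_eqI)
    fix x
    show "x \<in> \<sigma> -` A \<inter> space M \<longleftrightarrow> x \<in> A"
      using unb_shift[of \<sigma> g x] measurable_space[OF sm, of x] unfolding A_def unb_def by auto
  qed
  have "\<forall>B\<in>sets M. \<sigma> -` B \<inter> space M = B \<longrightarrow> measure M B = 0 \<or> measure M B = 1"
    using erg unfolding ergodic_map_def by blast
  then have "measure M A = 0 \<or> measure M A = 1" using A inv by blast
  moreover have "measure M A \<noteq> 1"
  proof
    assume A1: "measure M A = 1"
    define F where "F = (\<lambda>N. {\<omega>\<in>space M. mx \<sigma> g N \<omega> \<le> 0})"
    have Fs1: "\<And>N. F N \<in> sets M" unfolding F_def by measurable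
    then have Fs: "range F \<subseteq> sets M" by blast
    have Fd: "decseq F" unfolding decseq_Suc_iff
    proof (intro allI subsetI)
      fix N \<omega> assume "\<omega> \<in> F (Suc N)"
      then show "\<omega> \<in> F N" unfolding F_def using mx_mono[of \<sigma> g N \<omega>] by auto
    qed
    have sub: "(\<Inter>N. F N) \<subseteq> space M - A"
    proof
      fix \<omega> assume w: "\<omega> \<in> (\<Inter>N. F N)"
      have "\<forall>k. birk \<sigma> g k \<omega> \<le> 0"
      proof
        fix k
        have "\<omega> \<in> F k" using w by blast
        then have "mx \<sigma> g k \<omega> \<le> 0" by (simp add: F_def)
        then show "birk \<sigma> g k \<omega> \<le> 0" using mx_le0[of \<sigma> g k \<omega>] by blast
      qed
      moreover have "\<omega> \<in> space M" using w unfolding F_def by blast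
      moreover have "\<omega> \<notin> A"
      proof
        assume "\<omega> \<in> A"
        then obtain n where "birk \<sigma> g n \<omega> > real (0::nat)" unfolding A_def unb_def by blast
        with \<open>\<forall>k. birk \<sigma> g k \<omega> \<le> 0\<close> show False by (metis not_le of_nat_0)
      qed
      ultimately show "\<omega> \<in> space M - A" by blast
    qed
    have m0: "measure M (space M - A) = 0" using A1 A prob_compl by simp
    have "measure M (\<Inter>N. F N) \<le> measure M (space M - A)"
      using A sub by (intro finite_measure_mono) auto
    then have "measure M (\<Inter>N. F N) = 0"
      using m0 measure_nonneg[of M "\<Inter>N. F N"] by linarith
    then have lim: "(\<lambda>N. measure M (F N)) \<longlonglongrightarrow> 0"
      using finite_Lim_measure_decseq[OF Fs Fd] by simp
    have "(\<lambda>N. integral\<^sup>L M f - c + c * measure M (F N)) \<longlonglongrightarrow> integral\<^sup>L M f - c + c * 0"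
      by (intro tendsto_intros lim)
    moreover have "\<forall>N. 0 \<le> integral\<^sup>L M f - c + c * measure M (F N)"
      using max_ineq[OF P mp fi f0] c f0i unfolding F_def g_def by auto
    ultimately have "0 \<le> integral\<^sup>L M f - c + c * 0"
      by (intro LIMSEQ_le_const) auto
    then show False using c by simp
  qed
  ultimately show "measure M (unb M \<sigma> (\<lambda>\<omega>. f \<omega> - c)) = 0" unfolding A_def g_def by simp
qed



lemma good_sets:
  assumes P: "prob_space M" and erg: "ergodic_map M \<sigma>" and fi: "integrable M f"
    and f0: "\<And>\<omega>. f \<omega> \<ge> 0" and eta: "\<eta> > 0"
  shows "\<exists>N0. {\<omega>\<in>space M. \<forall>n\<ge>N0. birk \<sigma> f n \<omega> \<le> real n * (integral\<^sup>L M f + 1)} \<in> sets M \<and>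
           measure M {\<omega>\<in>space M. \<forall>n\<ge>N0. birk \<sigma> f n \<omega> \<le> real n * (integral\<^sup>L M f + 1)} \<ge> 1 - \<eta>"
proof -
  interpret prob_space M by (rule P)
  have mp: "measure_preserving_map M \<sigma>" using erg unfolding ergodic_map_def by blast
  have sm: "\<sigma> \<in> M \<rightarrow>\<^sub>M M" using mp unfolding measure_preserving_map_def by blast
  have fm: "f \<in> borel_measurable M" using fi by auto
  have [measurable]: "\<And>n. birk \<sigma> f n \<in> borel_measurable M" by (rule birk_meas[OF sm fm])
  define m where "m = integral\<^sup>L M f"
  define c where "c = m + 1/2"
  define A where "A = unb M \<sigma> (\<lambda>\<omega>. f \<omega> - c)"
  have A: "A \<in> sets M" "measure M A = 0" using unb_null[OF P erg fi f0, of c] unfolding A_def c_def m_def by auto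
  define D where "D = (\<lambda>N0. {\<omega>\<in>space M. \<forall>n\<ge>N0. birk \<sigma> f n \<omega> \<le> real n * (m + 1)})"
  have Ds1: "\<And>N. D N \<in> sets M" unfolding D_def by measurable
  then have Ds: "range D \<subseteq> sets M" by blast
  have Di: "incseq D" unfolding incseq_Suc_iff
  proof (intro allI subsetI)
    fix N \<omega> assume "\<omega> \<in> D N"
    then show "\<omega> \<in> D (Suc N)" unfolding D_def by auto
  qed
  have sub: "space M - A \<subseteq> (\<Union>N. D N)"
  proof
    fix \<omega> assume w: "\<omega> \<in> space M - A"
    then obtain K :: nat where K: "\<forall>n. birk \<sigma> (\<lambda>\<omega>. f \<omega> - c) n \<omega> \<le> real K"
      unfolding A_def unb_def by (auto simp: not_less)
    have "\<omega> \<in> D (2 * K)" unfolding D_def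
    proof (intro CollectI conjI allI impI)
      show "\<omega> \<in> space M" using w by auto
      fix n assume n: "2 * K \<le> n"
      have "birk \<sigma> f n \<omega> \<le> real K + real n * c" using K[rule_format, of n] by (simp add: birk_diff)
      also have "\<dots> \<le> real n * (m + 1)" using n unfolding c_def by (simp add: algebra_simps)
      finally show "birk \<sigma> f n \<omega> \<le> real n * (m + 1)" .
    qed
    then show "\<omega> \<in> (\<Union>N. D N)" by blast
  qed
  have "measure M (space M - A) = 1" using A prob_compl by simp
  moreover have "(\<Union>N. D N) \<in> sets M" unfolding D_def by measurable
  ultimately have "measure M (\<Union>N. D N) \<ge> 1"
    using finite_measure_mono[OF sub] by simp
  then have U1: "measure M (\<Union>N. D N) = 1" using prob_le_1[of "\<Union>N. D N"] by linarith
  have "(\<lambda>N. measure M (D N)) \<longlonglongrightarrow> 1" using finite_Lim_measure_incseq[OF Ds Di] U1 by simp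
  then have "eventually (\<lambda>N. measure M (D N) > 1 - \<eta>) sequentially"
    using eta by (intro order_tendstoD(1)) auto
  then obtain N0 where "measure M (D N0) > 1 - \<eta>" by (auto simp: eventually_sequentially)
  then show ?thesis using Ds unfolding D_def m_def by (intro exI[of _ N0]) auto
qed


lemma a1: "((\<lambda>e::real. exp (- ln e / 2) * (e * (- ln e))) \<longlongrightarrow> 0) (at_right 0)"
  by real_asymp
lemma a2: "((\<lambda>e::real. e * (- ln e)) \<longlongrightarrow> 0) (at_right 0)"
  by real_asymp
lemma a3: "filterlim (\<lambda>e::real. - ln e) at_top (at_right 0)"
  by real_asymp


lemma opn_le_exp: "mat_opnorm X \<le> exp (max 0 (ln (mat_opnorm X)))"
proof (cases "mat_opnorm X > 0")
  case True
  then have "mat_opnorm X = exp (ln (mat_opnorm X))" by simp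
  also have "\<dots> \<le> exp (max 0 (ln (mat_opnorm X)))" by simp
  finally show ?thesis .
next
  case False
  then have "mat_opnorm X = 0" using mo_nonneg[of X] by linarith
  then show ?thesis by simp
qed

theorem lemma2p3:
  fixes M :: "'a measure" and \<sigma> :: "'a \<Rightarrow> 'a" and A :: "'a \<Rightarrow> real^'d^'d"
  assumes "prob_space M"
    and "ergodic_map M \<sigma>"
    and "A \<in> borel_measurable M"
    and "integrable M (\<lambda>\<omega>. max 0 (ln (mat_opnorm (A \<omega>))))"
  shows "\<exists>C>0. \<forall>\<eta>\<^sub>0>0. \<exists>\<epsilon>\<^sub>0>0. \<forall>\<epsilon>::real. 0 < \<epsilon> \<and> \<epsilon> < \<epsilon>\<^sub>0 \<longrightarrow>
           (\<exists>G\<in>sets M. measure M G \<ge> 1 - \<eta>\<^sub>0 \<and>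
             (\<forall>\<omega>\<in>G. \<forall>\<Delta> :: int \<Rightarrow> real^'d^'d. (\<forall>n. mat_opnorm (\<Delta> n) \<le> 1) \<longrightarrow>
                (let N = nat \<lfloor>C * \<bar>ln \<epsilon>\<bar>\<rfloor> in
                 mat_opnorm (mat_prod (\<lambda>k. A ((\<sigma> ^^ k) \<omega>) + \<epsilon> *\<^sub>R \<Delta> (int k)) N
                             - mat_prod (\<lambda>k. A ((\<sigma> ^^ k) \<omega>)) N) \<le> 1)))"
proof -
  define f where "f = (\<lambda>\<omega>. max 0 (ln (mat_opnorm (A \<omega>))))"
  have fi: "integrable M f" using assms(4) unfolding f_def .
  have f0: "\<And>\<omega>. f \<omega> \<ge> 0" unfolding f_def by simp
  define m where "m = integral\<^sup>L M f"
  have m0: "m \<ge> 0" unfolding m_def using f0 by (simp add: integral_nonneg)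
  define L where "L = m + 1"
  have L0: "L > 0" unfolding L_def using m0 by simp
  define C where "C = 1 / (2 * L)"
  have C0: "C > 0" unfolding C_def using L0 by simp
  show ?thesis
  proof (rule exI[of _ C], intro conjI allI impI C0)
    fix \<eta> :: real assume eta: "\<eta> > 0"
    obtain N0 where G: "{\<omega>\<in>space M. \<forall>n\<ge>N0. birk \<sigma> f n \<omega> \<le> real n * (m + 1)} \<in> sets M"
      "measure M {\<omega>\<in>space M. \<forall>n\<ge>N0. birk \<sigma> f n \<omega> \<le> real n * (m + 1)} \<ge> 1 - \<eta>"
      using good_sets[OF assms(1,2) fi f0 eta] unfolding m_def by blast
    define G where "G = {\<omega>\<in>space M. \<forall>n\<ge>N0. birk \<sigma> f n \<omega> \<le> real n * (m + 1)}"
    have ev1: "eventually (\<lambda>e::real. e < 1) (at_right 0)"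
      unfolding eventually_at_right_field by (intro exI[of _ 1]) auto
    have ev2: "eventually (\<lambda>e::real. exp (- ln e / 2) * (e * (- ln e)) < L) (at_right 0)"
      using a1 L0 by (rule order_tendstoD(2))
    have ev3: "eventually (\<lambda>e::real. e * (- ln e) < 2 * L) (at_right 0)"
      using a2 L0 by (intro order_tendstoD(2)) auto
    have ev4: "eventually (\<lambda>e::real. - ln e > 2 * L * (real N0 + 1)) (at_right 0)"
      using a3 unfolding filterlim_at_top_dense by blast
    have "eventually (\<lambda>e::real. e < 1 \<and> exp (- ln e / 2) * (e * (- ln e)) < L \<and>
        e * (- ln e) < 2 * L \<and> - ln e > 2 * L * (real N0 + 1)) (at_right 0)"
      by (intro eventually_conj ev1 ev2 ev3 ev4)
    then obtain b :: real where b: "b > 0" and bP: "\<And>e. e > 0 \<Longrightarrow> e < b \<Longrightarrow> e < 1 \<and>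
        exp (- ln e / 2) * (e * (- ln e)) < L \<and> e * (- ln e) < 2 * L \<and> - ln e > 2 * L * (real N0 + 1)"
      unfolding eventually_at_right_field by blast
    show "\<exists>\<epsilon>\<^sub>0>0. \<forall>\<epsilon>::real. 0 < \<epsilon> \<and> \<epsilon> < \<epsilon>\<^sub>0 \<longrightarrow>
           (\<exists>G\<in>sets M. measure M G \<ge> 1 - \<eta> \<and>
             (\<forall>\<omega>\<in>G. \<forall>\<Delta> :: int \<Rightarrow> real^'d^'d. (\<forall>n. mat_opnorm (\<Delta> n) \<le> 1) \<longrightarrow>
                (let N = nat \<lfloor>C * \<bar>ln \<epsilon>\<bar>\<rfloor> in
                 mat_opnorm (mat_prod (\<lambda>k. A ((\<sigma> ^^ k) \<omega>) + \<epsilon> *\<^sub>R \<Delta> (int k)) N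
                             - mat_prod (\<lambda>k. A ((\<sigma> ^^ k) \<omega>)) N) \<le> 1)))"
    proof (rule exI[of _ b], intro conjI allI impI b)
      fix e :: real assume e: "0 < e \<and> e < b"
      then have e0: "e > 0" and e1: "e < 1" and P2: "exp (- ln e / 2) * (e * (- ln e)) < L"
        and P3: "e * (- ln e) < 2 * L" and P4: "- ln e > 2 * L * (real N0 + 1)"
        using bP[of e] by auto
      define x where "x = C * \<bar>ln e\<bar>"
      have lnneg: "ln e < 0" using e0 e1 by simp
      have xe: "x = - ln e / (2 * L)" unfolding x_def C_def using lnneg by simp
      define Nn where "Nn = nat \<lfloor>x\<rfloor>"
      have x0: "x \<ge> 0" unfolding x_def using C0 by simp
      have Nx: "real Nn \<le> x" unfolding Nn_def using x0 by linarith
      have xN: "x < real Nn + 1" unfolding Nn_def using x0 by linarith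
      have xN0: "x > real N0 + 1" unfolding xe using P4 L0 by (simp add: field_simps)
      have NN0: "Nn \<ge> N0" using xN xN0 by linarith
      show "\<exists>G\<in>sets M. measure M G \<ge> 1 - \<eta> \<and>
             (\<forall>\<omega>\<in>G. \<forall>\<Delta> :: int \<Rightarrow> real^'d^'d. (\<forall>n. mat_opnorm (\<Delta> n) \<le> 1) \<longrightarrow>
                (let N = nat \<lfloor>C * \<bar>ln e\<bar>\<rfloor> in
                 mat_opnorm (mat_prod (\<lambda>k. A ((\<sigma> ^^ k) \<omega>) + e *\<^sub>R \<Delta> (int k)) N
                             - mat_prod (\<lambda>k. A ((\<sigma> ^^ k) \<omega>)) N) \<le> 1))"
      proof (intro bexI[of _ G] conjI ballI allI impI)
        show "G \<in> sets M" using G(1) unfolding G_def by blast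
        show "measure M G \<ge> 1 - \<eta>" using G(2) unfolding G_def by blast
        fix \<omega> and \<Delta> :: "int \<Rightarrow> real^'d^'d"
        assume w: "\<omega> \<in> G" and D: "\<forall>n. mat_opnorm (\<Delta> n) \<le> 1"
        have "\<forall>n\<ge>N0. birk \<sigma> f n \<omega> \<le> real n * (m + 1)" using w unfolding G_def by blast
        then have birkN: "birk \<sigma> f Nn \<omega> \<le> real Nn * L" using NN0 unfolding L_def by blast
        let ?b = "\<lambda>k. exp (f ((\<sigma> ^^ k) \<omega>))"
        have pb: "mat_opnorm (mat_prod (\<lambda>k. A ((\<sigma> ^^ k) \<omega>) + e *\<^sub>R \<Delta> (int k)) Nn
                             - mat_prod (\<lambda>k. A ((\<sigma> ^^ k) \<omega>)) Nn) \<le> (\<Prod>k<Nn. ?b k) * ((1+e)^Nn - 1)"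
        proof -
          have ab: "\<And>k. mat_opnorm (A ((\<sigma> ^^ k) \<omega>)) \<le> ?b k" unfolding f_def by (rule opn_le_exp)
          have b1: "\<And>k. 1 \<le> ?b k" using f0 by simp
          have dd: "\<And>k. mat_opnorm (\<Delta> (int k)) \<le> 1" using D by blast
          show ?thesis using prod_bound[of e "\<lambda>k. A ((\<sigma> ^^ k) \<omega>)" ?b "\<lambda>k. \<Delta> (int k)" Nn, OF _ ab b1 dd] less_imp_le[OF e0]
            by blast
        qed
        have prodb: "(\<Prod>k<Nn. ?b k) = exp (birk \<sigma> f Nn \<omega>)"
          unfolding birk_def by (simp add: exp_sum)
        have pe1: "(1+e)^Nn - 1 \<ge> 0" using e0 by simp
        have "(1+e)^Nn \<le> exp e ^ Nn" using e0 by (intro power_mono) auto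
        also have "\<dots> = exp (real Nn * e)" by (simp add: exp_of_nat_mult)
        finally have pe: "(1+e)^Nn \<le> exp (real Nn * e)" .
        have t1: "real Nn * e \<le> 1"
        proof -
          have "real Nn * e \<le> x * e" using Nx e0 by (simp add: mult_right_mono)
          also have "\<dots> = e * (- ln e) / (2 * L)" unfolding xe by simp
          also have "\<dots> \<le> 1" using P3 L0 by (simp add: field_simps)
          finally show ?thesis .
        qed
        have t0: "real Nn * e \<ge> 0" using e0 by simp
        have "exp (real Nn * e) \<le> 1 + real Nn * e + (real Nn * e)^2" by (rule exp_bound[OF t0 t1])
        also have "\<dots> \<le> 1 + 2 * (real Nn * e)" using t0 t1 mult_right_le_one_le[of "real Nn * e" "real Nn * e"] by (simp add: power2_eq_square mult.commute)
        finally have pe2: "(1+e)^Nn - 1 \<le> 2 * (real Nn * e)" using pe by linarith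
        have eb: "exp (birk \<sigma> f Nn \<omega>) \<le> exp (- ln e / 2)"
        proof -
          have "birk \<sigma> f Nn \<omega> \<le> x * L" using birkN Nx L0 by (smt (verit) mult_right_mono)
          also have "x * L = - ln e / 2" unfolding xe using L0 by simp
          finally show ?thesis by simp
        qed
        have "mat_opnorm (mat_prod (\<lambda>k. A ((\<sigma> ^^ k) \<omega>) + e *\<^sub>R \<Delta> (int k)) Nn
                             - mat_prod (\<lambda>k. A ((\<sigma> ^^ k) \<omega>)) Nn)
              \<le> exp (- ln e / 2) * (2 * (real Nn * e))"
          using pb unfolding prodb
          by (rule order.trans) (intro mult_mono eb pe2 pe1; simp)
        also have "\<dots> \<le> exp (- ln e / 2) * (2 * (x * e))"
          using Nx e0 by (intro mult_left_mono) (auto simp: mult_right_mono)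
        also have "\<dots> = exp (- ln e / 2) * (e * (- ln e)) / L" unfolding xe using L0 by simp
        also have "\<dots> \<le> 1" by (simp only: divide_le_eq_1_pos[OF L0]) (rule less_imp_le[OF P2])
        finally show "let N = nat \<lfloor>C * \<bar>ln e\<bar>\<rfloor> in
                 mat_opnorm (mat_prod (\<lambda>k. A ((\<sigma> ^^ k) \<omega>) + e *\<^sub>R \<Delta> (int k)) N
                             - mat_prod (\<lambda>k. A ((\<sigma> ^^ k) \<omega>)) N) \<le> 1"
          unfolding Let_def Nn_def x_def by simp
      qed
    qed
  qed
qed

end
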